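(* Let $q$ be even and let $U$ be an intersecting family of polynomials over $\mathbb{F}_q$ of degree at most $2$ with $|U|>\frac{q^2+q}{2}$. Suppose $H\subseteq U$ has more than $\frac{q^2}{2}$ elements and there exist $\alpha,\beta\in\mathbb{F}_q$ with $h(\alpha)=\beta$ for all $h\in H$. Then $f(\alpha)=\beta$ for every $f\in U$.
   Context: A set of polynomials over $\mathbb{F}_q$ is intersecting if for any two members $f_1,f_2$ the graphs $\{(x,f_i(x)):x\in\mathbb{F}_q\}$ share at least one point. *)

theory Defs
  imports "HOL-Computational_Algebra.Polynomial"
begin

definition intersecting :: "'a::field poly set \<Rightarrow> bool" where
  "intersecting U \<longleftrightarrow> (\<forall>f1\<in>U. \<forall>f2\<in>U. \<exists>x. poly f1 x = poly f2 x)"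

end

theory Submission
  imports Defs
begin

lemma poly2:
  fixes h :: "'a::comm_ring_1 poly"
  assumes "degree h \<le> 2"
  shows "poly h x = coeff h 0 + coeff h 1 * x + coeff h 2 * x^2"
proof -
  have "poly h x = (\<Sum>i\<le>degree h. coeff h i * x ^ i)" by (rule poly_altdef)
  also have "\<dots> = (\<Sum>i\<le>2. coeff h i * x ^ i)"
    by (rule sum.mono_neutral_left) (use assms in \<open>auto simp: coeff_eq_0\<close>)
  also have "\<dots> = coeff h 0 + coeff h 1 * x + coeff h 2 * x^2"
    by (simp add: numeral_2_eq_2)
  finally show ?thesis .
qed

lemma card_fibers:
  assumes "finite A"
  shows "card A = (\<Sum>y\<in>\<psi> ` A. card {x\<in>A. \<psi> x = y})"
proof -
  have "card A = (\<Sum>x\<in>A. 1)" by (rule card_eq_sum)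
  also have "\<dots> = (\<Sum>y\<in>\<psi> ` A. \<Sum>x\<in>{x\<in>A. \<psi> x = y}. 1)" by (rule sum.image_gen[OF assms])
  also have "\<dots> = (\<Sum>y\<in>\<psi> ` A. card {x\<in>A. \<psi> x = y})"
    by (rule sum.cong[OF refl]) (rule card_eq_sum[symmetric])
  finally show ?thesis .
qed

lemma fiber_count:
  assumes "finite A" and "\<And>x. x \<in> A \<Longrightarrow> \<sigma> x \<in> A \<and> \<sigma> x \<noteq> x \<and> \<psi> (\<sigma> x) = \<psi> x"
  shows "2 * card (\<psi> ` A) \<le> card A"
proof -
  have "2 * card (\<psi> ` A) = (\<Sum>y\<in>\<psi> ` A. 2)" by simp
  also have "\<dots> \<le> (\<Sum>y\<in>\<psi> ` A. card {x\<in>A. \<psi> x = y})"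
  proof (rule sum_mono)
    fix y assume "y \<in> \<psi> ` A"
    then obtain x where x: "x \<in> A" "\<psi> x = y" by blast
    have "{x, \<sigma> x} \<subseteq> {x\<in>A. \<psi> x = y}" using x assms(2)[OF x(1)] by auto
    moreover have "finite {x\<in>A. \<psi> x = y}" using assms(1) by simp
    ultimately have "card {x, \<sigma> x} \<le> card {x\<in>A. \<psi> x = y}" by (rule card_mono[rotated])
    moreover have "card {x, \<sigma> x} = 2" using assms(2)[OF x(1)] by (metis card_2_iff)
    ultimately show "2 \<le> card {x\<in>A. \<psi> x = y}" by linarith
  qed
  also have "\<dots> = card A" by (rule card_fibers[OF assms(1), symmetric])
  finally show ?thesis .
qed

lemma char2:
  assumes "even (card (UNIV :: 'a::{finite,field} set))"
  shows "(2::'a) = 0"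
proof (rule ccontr)
  assume ne: "(2::'a) \<noteq> 0"
  define A where "A = (UNIV - {0::'a})"
  have neg: "x \<noteq> - x" if "x \<in> A" for x
  proof
    assume "x = - x"
    then have "2 * x = 0" by (metis mult_2 add_eq_0_iff)
    then show False using ne that A_def by simp
  qed
  have "card A = (\<Sum>y\<in>(\<lambda>x. {x, -x}) ` A. card {z\<in>A. {z, -z} = y})"
    by (rule card_fibers) simp
  also have "\<dots> = (\<Sum>y\<in>(\<lambda>x. {x, -x}) ` A. 2)"
  proof (rule sum.cong[OF refl])
    fix y assume "y \<in> (\<lambda>x. {x, -x}) ` A"
    then obtain x where x: "x \<in> A" "y = {x, -x}" by blast
    have "{z\<in>A. {z, -z} = y} = {x, -x}"
    proof (intro set_eqI iffI)
      fix z assume "z \<in> {z\<in>A. {z, -z} = y}"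
      then have "{z, -z} = {x, -x}" using x by simp
      then show "z \<in> {x, -x}" by (metis insertI1)
    next
      fix z assume "z \<in> {x, -x}"
      then show "z \<in> {z\<in>A. {z, -z} = y}" using x by (auto simp: A_def)
    qed
    then show "card {z\<in>A. {z, -z} = y} = 2" using neg[OF x(1)] by simp
  qed
  finally have "even (card A)" by simp
  moreover have "card (UNIV::'a set) = card A + 1"
  proof -
    have "card A = card (UNIV::'a set) - 1" unfolding A_def by (simp add: card_Diff_singleton)
    moreover have "card (UNIV::'a set) > 0" by (simp add: card_gt_0_iff)
    ultimately show ?thesis by linarith
  qed
  ultimately show False using assms by simp
qed


lemma card_fibers_univ:
  fixes \<phi> :: "'b \<Rightarrow> 'c::finite"
  assumes "finite A"
  shows "card A = (\<Sum>y\<in>UNIV. card {x\<in>A. \<phi> x = y})"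
proof -
  have "card A = (\<Sum>y\<in>\<phi> ` A. card {x\<in>A. \<phi> x = y})" by (rule card_fibers[OF assms])
  also have "\<dots> = (\<Sum>y\<in>UNIV. card {x\<in>A. \<phi> x = y})"
  proof (rule sum.mono_neutral_left)
    show "\<forall>i\<in>UNIV - \<phi> ` A. card {x \<in> A. \<phi> x = i} = 0"
    proof
      fix i assume "i \<in> UNIV - \<phi> ` A"
      then have "{x \<in> A. \<phi> x = i} = {}" by blast
      then show "card {x \<in> A. \<phi> x = i} = 0" by (metis card.empty)
    qed
  qed auto
  finally show ?thesis .
qed

lemma line_inj:
  fixes h h' :: "'a::comm_ring_1 poly"
  assumes "degree h \<le> 2" "degree h' \<le> 2" "poly h \<alpha> = poly h' \<alpha>"
    "coeff h 1 = coeff h' 1" "coeff h 2 = coeff h' 2"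
  shows "h = h'"
proof -
  have c0: "coeff h 0 = coeff h' 0"
    using poly2[OF assms(1), of \<alpha>] poly2[OF assms(2), of \<alpha>] assms(3-5) by simp
  show ?thesis
  proof (rule poly_eqI)
    fix n show "coeff h n = coeff h' n"
    proof (cases "n \<le> 2")
      case True
      then have "n = 0 \<or> n = 1 \<or> n = 2" by auto
      then show ?thesis using c0 assms(4,5) by auto
    next
      case False
      then show ?thesis using assms(1,2) by (simp add: coeff_eq_0)
    qed
  qed
qed

lemma const_diff:
  fixes g g' :: "'a::comm_ring_1 poly"
  assumes "degree g \<le> 2" "degree g' \<le> 2" "coeff g 1 = coeff g' 1" "coeff g 2 = coeff g' 2"
  shows "poly g x - poly g' x = poly g y - poly g' y"
  using poly2[OF assms(1)] poly2[OF assms(2)] assms(3,4) by simp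

lemma key:
  fixes g :: "'a::{finite,field} poly"
  assumes c2: "(2::'a) = 0" and dg: "degree g \<le> 2" and ne: "poly g \<alpha> \<noteq> \<beta>"
    and a: "a \<noteq> coeff g 1" and finA: "finite A"
    and A: "\<And>h. h \<in> A \<Longrightarrow> degree h \<le> 2 \<and> poly h \<alpha> = \<beta> \<and> coeff h 1 = a \<and> (\<exists>x. poly h x = poly g x)"
  shows "2 * card A \<le> card (UNIV::'a set)"
proof -
  define c where "c = \<beta> - poly g \<alpha>"
  define d where "d = a - coeff g 1"
  define \<psi> where "\<psi> s = coeff g 2 - c * s^2 - d * s" for s
  have c0: "c \<noteq> 0" using ne c_def by simp
  have d0: "d \<noteq> 0" using a d_def by simp
  have inj: "inj_on (\<lambda>h. coeff h 2) A"
    unfolding inj_on_def using A line_inj by metis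
  have sub: "(\<lambda>h. coeff h 2) ` A \<subseteq> \<psi> ` UNIV"
  proof
    fix e assume "e \<in> (\<lambda>h. coeff h 2) ` A"
    then obtain h where hA: "h \<in> A" and e: "e = coeff h 2" by blast
    obtain x where hx: "poly h x = poly g x" using A[OF hA] by blast
    have dh: "degree h \<le> 2" and ha: "poly h \<alpha> = \<beta>" and h1: "coeff h 1 = a" using A[OF hA] by auto
    define t where "t = x - \<alpha>"
    define E where "E = e - coeff g 2"
    have eqx: "coeff h 0 + a*x + e*x^2 - (coeff g 0 + coeff g 1 * x + coeff g 2 * x^2) = 0"
      using hx poly2[OF dh, of x] poly2[OF dg, of x] h1 e by simp
    have eqa: "coeff h 0 + a*\<alpha> + e*\<alpha>^2 - \<beta> = 0"
      using ha poly2[OF dh, of \<alpha>] h1 e by simp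
    have ga: "poly g \<alpha> = coeff g 0 + coeff g 1 * \<alpha> + coeff g 2 * \<alpha>^2"
      using poly2[OF dg] by simp
    have "d*t + E*t^2 + 2*(\<alpha>*E*t) + c = (coeff h 0 + a*x + e*x^2 - (coeff g 0 + coeff g 1 * x + coeff g 2 * x^2)) - (coeff h 0 + a*\<alpha> + e*\<alpha>^2 - \<beta>)"
      unfolding d_def E_def t_def c_def ga by (simp add: algebra_simps power2_eq_square)
    then have eq: "d*t + E*t^2 = - c" using eqx eqa c2 by (simp add: eq_neg_iff_add_eq_0)
    have t0: "t \<noteq> 0" using eq c0 by auto
    define s where "s = inverse t"
    have "E = E * t^2 * s^2" using t0 by (simp add: s_def field_simps)
    also have "\<dots> = (d*t + E*t^2)*s^2 - d*t*s^2" by (simp add: algebra_simps)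
    also have "\<dots> = (- c - d*t) * s^2" using eq by (simp add: algebra_simps)
    also have "\<dots> = - c * s^2 - d * s" using t0 by (simp add: s_def field_simps power2_eq_square)
    finally have "e = \<psi> s" unfolding \<psi>_def E_def by (simp add: algebra_simps)
    then show "e \<in> \<psi> ` UNIV" by blast
  qed
  have fib: "2 * card (\<psi> ` UNIV) \<le> card (UNIV::'a set)"
  proof (rule fiber_count[where \<sigma> = "\<lambda>s. s - d / c"])
    fix s :: 'a
    have "\<psi> (s - d / c) = \<psi> s + 2 * (c * s * (d / c))"
      unfolding \<psi>_def using c0 by (simp add: field_simps power2_eq_square)
    then show "s - d / c \<in> UNIV \<and> s - d / c \<noteq> s \<and> \<psi> (s - d / c) = \<psi> s"
      using c0 d0 c2 by simp
  qed simp
  have "card A = card ((\<lambda>h. coeff h 2) ` A)" using card_image[OF inj] by simp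
  also have "\<dots> \<le> card (\<psi> ` UNIV)" by (rule card_mono[OF _ sub]) simp
  finally show ?thesis using fib by linarith
qed


theorem lemma6:
  fixes U H :: "'a::{finite,field} poly set" and \<alpha> \<beta> :: 'a
  assumes "even (card (UNIV :: 'a set))"
    and "intersecting U"
    and "\<forall>f\<in>U. degree f \<le> 2"
    and "real (card U) > (real (card (UNIV :: 'a set)) ^ 2 + real (card (UNIV :: 'a set))) / 2"
    and "H \<subseteq> U"
    and "real (card H) > real (card (UNIV :: 'a set)) ^ 2 / 2"
    and "\<forall>h\<in>H. poly h \<alpha> = \<beta>"
  shows "\<forall>f\<in>U. poly f \<alpha> = \<beta>"
proof (rule ccontr)
  assume "\<not> (\<forall>f\<in>U. poly f \<alpha> = \<beta>)"
  then obtain f where fU: "f \<in> U" and fne: "poly f \<alpha> \<noteq> \<beta>" by blast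
  define q where "q = card (UNIV :: 'a set)"
  have c2: "(2::'a) = 0" by (rule char2[OF assms(1)])
  have cU: "2 * card U > q^2 + q"
  proof -
    have "real (2 * card U) > real (q^2 + q)" using assms(4) unfolding q_def by simp
    then show ?thesis by linarith
  qed
  have cH: "2 * card H > q^2"
  proof -
    have "real (2 * card H) > real (q^2)" using assms(6) unfolding q_def by simp
    then show ?thesis by linarith
  qed
  have finU: "finite U" using cU card.infinite by fastforce
  have finH: "finite H" using finU assms(5) finite_subset by blast
  have deg: "\<And>g. g \<in> U \<Longrightarrow> degree g \<le> 2" using assms(3) by blast
  have meet: "\<And>g g'. g \<in> U \<Longrightarrow> g' \<in> U \<Longrightarrow> \<exists>x. poly g x = poly g' x"
    using assms(2) unfolding intersecting_def by blast
  define a0 where "a0 = coeff f 1"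
  define U1 where "U1 = {g\<in>U. poly g \<alpha> \<noteq> \<beta>}"
  define U0 where "U0 = {g\<in>U. poly g \<alpha> = \<beta>}"
  have keyf: "2 * card {h\<in>B. coeff h 1 = a} \<le> q"
    if "B \<subseteq> U0" "a \<noteq> coeff g 1" "g \<in> U1" for B a g
  proof (rule key[OF c2, of g \<alpha> \<beta> a, folded q_def])
    show "degree g \<le> 2" "poly g \<alpha> \<noteq> \<beta>" using that deg unfolding U1_def by auto
    show "a \<noteq> coeff g 1" by fact
    show "finite {h \<in> B. coeff h 1 = a}"
      using finU that(1) unfolding U0_def by (auto intro: finite_subset)
    fix h assume "h \<in> {h \<in> B. coeff h 1 = a}"
    then show "degree h \<le> 2 \<and> poly h \<alpha> = \<beta> \<and> coeff h 1 = a \<and> (\<exists>x. poly h x = poly g x)"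
      using that deg meet unfolding U0_def U1_def by auto
  qed
  have fU1: "f \<in> U1" using fU fne U1_def by simp
  have claim1: "coeff g 1 = a0" if gU1: "g \<in> U1" for g
  proof (rule ccontr)
    assume gne: "coeff g 1 \<noteq> a0"
    have HU0: "H \<subseteq> U0" using assms(5,7) unfolding U0_def by auto
    have b: "2 * card {h\<in>H. coeff h 1 = a} \<le> q" for a
    proof (cases "a = a0")
      case True
      then show ?thesis using keyf[OF HU0 _ gU1] gne by simp
    next
      case False
      then show ?thesis using keyf[OF HU0 _ fU1] a0_def by simp
    qed
    have "2 * card H = (\<Sum>a\<in>UNIV. 2 * card {h\<in>H. coeff h 1 = a})"
      using card_fibers_univ[OF finH, of "\<lambda>h. coeff h 1"] by (simp add: sum_distrib_left)
    also have "\<dots> \<le> (\<Sum>a\<in>(UNIV::'a set). q)" by (rule sum_mono) (rule b)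
    also have "\<dots> = q^2" by (simp add: q_def power2_eq_square)
    finally show False using cH by linarith
  qed
  have U1_sub: "U1 \<subseteq> U" unfolding U1_def by auto
  have inj1: "inj_on (\<lambda>g. coeff g 2) U1"
  proof (rule inj_onI)
    fix g g' assume g: "g \<in> U1" and g': "g' \<in> U1" and e: "coeff g 2 = coeff g' 2"
    have d: "degree g \<le> 2" "degree g' \<le> 2" using g g' U1_sub deg by auto
    have c1: "coeff g 1 = coeff g' 1" using claim1 g g' by simp
    obtain x where "poly g x = poly g' x" using meet g g' U1_sub by blast
    then have "poly g \<alpha> = poly g' \<alpha>" using const_diff[OF d c1 e, of x \<alpha>] by simp
    then show "g = g'" by (rule line_inj[OF d _ c1 e])
  qed
  define L where "L = {h\<in>U0. coeff h 1 = a0}"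
  have injL: "inj_on (\<lambda>g. coeff g 2) L"
  proof (rule inj_onI)
    fix g g' assume g: "g \<in> L" and g': "g' \<in> L" and e: "coeff g 2 = coeff g' 2"
    have d: "degree g \<le> 2" "degree g' \<le> 2" using g g' deg unfolding L_def U0_def by auto
    have c1: "coeff g 1 = coeff g' 1" and pa: "poly g \<alpha> = poly g' \<alpha>"
      using g g' unfolding L_def U0_def by auto
    show "g = g'" by (rule line_inj[OF d pa c1 e])
  qed
  have subL: "(\<lambda>g. coeff g 2) ` L \<subseteq> UNIV - (\<lambda>g. coeff g 2) ` U1"
  proof
    fix e assume "e \<in> (\<lambda>g. coeff g 2) ` L"
    then obtain h where hL: "h \<in> L" and e: "e = coeff h 2" by blast
    have "e \<notin> (\<lambda>g. coeff g 2) ` U1"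
    proof
      assume "e \<in> (\<lambda>g. coeff g 2) ` U1"
      then obtain g where g: "g \<in> U1" and e2: "coeff h 2 = coeff g 2" using e by auto
      have hU: "h \<in> U" and ha: "poly h \<alpha> = \<beta>" and h1: "coeff h 1 = a0" using hL unfolding L_def U0_def by auto
      have d: "degree h \<le> 2" "degree g \<le> 2" using hU g U1_sub deg by auto
      have c1: "coeff h 1 = coeff g 1" using claim1[OF g] h1 by simp
      obtain x where "poly h x = poly g x" using meet hU g U1_sub by blast
      then have "poly h \<alpha> = poly g \<alpha>" using const_diff[OF d c1 e2, of x \<alpha>] by simp
      then show False using ha g unfolding U1_def by simp
    qed
    then show "e \<in> UNIV - (\<lambda>g. coeff g 2) ` U1" by simp
  qed
  have finU1: "finite U1" using finU U1_sub finite_subset by blast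
  have cL: "card L + card U1 \<le> q"
  proof -
    have "card L = card ((\<lambda>g. coeff g 2) ` L)" using card_image[OF injL] by simp
    also have "\<dots> \<le> card (UNIV - (\<lambda>g. coeff g 2) ` U1)" by (rule card_mono[OF _ subL]) simp
    also have "\<dots> = q - card U1"
      using card_image[OF inj1] by (simp add: card_Diff_subset q_def)
    finally have "card L \<le> q - card U1" .
    moreover have "card U1 \<le> q" using card_image[OF inj1] card_mono[of UNIV "(\<lambda>g. coeff g 2) ` U1"]
      unfolding q_def by simp
    ultimately show ?thesis by linarith
  qed
  have finU0: "finite U0" using finU unfolding U0_def by simp
  have "card U0 = (\<Sum>a\<in>UNIV. card {h\<in>U0. coeff h 1 = a})"
    by (rule card_fibers_univ[OF finU0])
  also have "\<dots> = card L + (\<Sum>a\<in>UNIV - {a0}. card {h\<in>U0. coeff h 1 = a})"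
    unfolding L_def by (subst sum.remove[of _ a0]) auto
  finally have e0: "2 * card U0 = 2 * card L + (\<Sum>a\<in>UNIV - {a0}. 2 * card {h\<in>U0. coeff h 1 = a})"
    by (simp add: sum_distrib_left)
  have "(\<Sum>a\<in>UNIV - {a0}. 2 * card {h\<in>U0. coeff h 1 = a}) \<le> (\<Sum>a\<in>UNIV - {a0}. q)"
  proof (rule sum_mono)
    fix a assume "a \<in> UNIV - {a0}"
    then show "2 * card {h\<in>U0. coeff h 1 = a} \<le> q" using keyf[OF _ _ fU1, of U0 a] a0_def by auto
  qed
  also have "\<dots> = (q - 1) * q" by (simp add: card_Diff_singleton q_def)
  finally have e1: "2 * card U0 \<le> 2 * card L + (q - 1) * q" using e0 by linarith
  have "U = U0 \<union> U1" "U0 \<inter> U1 = {}" unfolding U0_def U1_def by auto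
  then have "card U = card U0 + card U1" using finU by (metis card_Un_disjoint finite_Un)
  then have "2 * card U \<le> 2 * q + (q - 1) * q" using e1 cL by linarith
  moreover have "q > 0" unfolding q_def by (simp add: card_gt_0_iff)
  then have "2 * q + (q - 1) * q = q^2 + q"
    by (cases q) (auto simp: power2_eq_square algebra_simps)
  ultimately show False using cU by linarith
qed

end
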